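(* Let $(W,\mathrm d)$ and $(W_h,\mathrm d_h)$, $h>0$, be Hilbert complexes with morphisms $i_h\colon W_h\to W$ bounded uniformly in $h$. If $\Pi_h\colon W^k\to W_h^k$ is a family of bounded linear maps, bounded uniformly with respect to $h$, satisfying $\Pi_h\circ i_h^k=\mathrm{id}_{W_h^k}$, then there is a constant $C$ independent of $h$ such that for all $f\in W^k$, \[\|\Pi_hf-i_h^*f\|_h\le C\Big(\|I-J_h\|\,\|f\|+\inf_{\phi\in i_hW_h^k}\|f-\phi\|\Big).\]
   Context: A Hilbert complex $(W,\mathrm d)$ is a sequence of Hilbert spaces $W^k$ with closed densely defined linear maps $\mathrm d^k\colon V^k\subset W^k\to V^{k+1}\subset W^{k+1}$, $\mathrm d^k\circ\mathrm d^{k-1}=0$; a morphism is a sequence of bounded linear maps commuting with differentials. $\|\cdot\|$ is the $W^k$ norm, $\|\cdot\|_h$ the $W_h^k$ norm. $i_h^*\colon W^k\to W_h^k$ is the Hilbert adjoint of $i_h^k\colon W_h^k\to W^k$, $J_h=i_h^*i_h\colon W_h^k\to W_h^k$, and $\|I-J_h\|$ is its operator norm. *)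

theory Defs
  imports "HOL-Analysis.Analysis"
begin

text \<open>Spaces of a Hilbert complex are modelled as closed linear subspaces of one ambient
real Hilbert space (type of class real_inner and complete_space); degrees are natural numbers.\<close>

definition linear_on :: "'a::real_vector set \<Rightarrow> ('a \<Rightarrow> 'b::real_vector) \<Rightarrow> bool" where
  "linear_on A f \<longleftrightarrow> (\<forall>x\<in>A. \<forall>y\<in>A. f (x + y) = f x + f y) \<and> (\<forall>c. \<forall>x\<in>A. f (c *\<^sub>R x) = c *\<^sub>R f x)"

definition bounded_linear_on ::
  "'a::real_normed_vector set \<Rightarrow> 'b::real_normed_vector set \<Rightarrow> ('a \<Rightarrow> 'b) \<Rightarrow> bool" where
  "bounded_linear_on A B f \<longleftrightarrow> linear_on A f \<and> f ` A \<subseteq> B \<and> (\<exists>K. \<forall>x\<in>A. norm (f x) \<le> K * norm x)"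

definition hilbert_complex ::
  "(nat \<Rightarrow> 'a::{real_inner,complete_space} set) \<Rightarrow> (nat \<Rightarrow> 'a set) \<Rightarrow> (nat \<Rightarrow> 'a \<Rightarrow> 'a) \<Rightarrow> bool" where
  "hilbert_complex W V d \<longleftrightarrow>
     (\<forall>j. subspace (W j) \<and> closed (W j)
        \<and> subspace (V j) \<and> V j \<subseteq> W j \<and> W j \<subseteq> closure (V j)
        \<and> linear_on (V j) (d j) \<and> d j ` V j \<subseteq> V (Suc j)
        \<and> closed {(x, d j x) | x. x \<in> V j}
        \<and> (\<forall>x\<in>V j. d (Suc j) (d j x) = 0))"

definition hc_morphism ::
  "(nat \<Rightarrow> 'b::{real_inner,complete_space} set) \<Rightarrow> (nat \<Rightarrow> 'b set) \<Rightarrow> (nat \<Rightarrow> 'b \<Rightarrow> 'b) \<Rightarrow>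
   (nat \<Rightarrow> 'a::{real_inner,complete_space} set) \<Rightarrow> (nat \<Rightarrow> 'a set) \<Rightarrow> (nat \<Rightarrow> 'a \<Rightarrow> 'a) \<Rightarrow>
   (nat \<Rightarrow> 'b \<Rightarrow> 'a) \<Rightarrow> bool" where
  "hc_morphism W' V' d' W V d f \<longleftrightarrow>
     (\<forall>j. bounded_linear_on (W' j) (W j) (f j) \<and> f j ` V' j \<subseteq> V j
        \<and> (\<forall>x\<in>V' j. f (Suc j) (d' j x) = d j (f j x)))"

definition hadj :: "'b::real_inner set \<Rightarrow> ('b \<Rightarrow> 'a::real_inner) \<Rightarrow> 'a \<Rightarrow> 'b" where
  "hadj U f y = (THE z. z \<in> U \<and> (\<forall>x\<in>U. inner (f x) y = inner x z))"

definition opnorm_on :: "'a::real_normed_vector set \<Rightarrow> ('a \<Rightarrow> 'b::real_normed_vector) \<Rightarrow> real" where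
  "opnorm_on U T = Sup {norm (T x) | x. x \<in> U \<and> norm x \<le> 1}"

end

theory Submission
  imports Defs
begin

lemma aux_quad: "(u::real) \<noteq> 0 \<Longrightarrow> 2 * (- c / u) * c + (- c / u)\<^sup>2 * (u - 1) = c\<^sup>2 * (- (u - 1) - 2) / u\<^sup>2"
  by (simp add: field_simps power2_eq_square)

lemma riesz_sub:
  fixes U :: "'b::{real_inner,complete_space} set" and L :: "'b \<Rightarrow> real"
  assumes sU: "subspace U" and cU: "closed U" and lin: "linear_on U L"
    and bnd: "\<And>x. x \<in> U \<Longrightarrow> \<bar>L x\<bar> \<le> M * norm x" and M0: "M \<ge> 0"
  shows "\<exists>z\<in>U. \<forall>x\<in>U. L x = inner x z"
proof -
  have Ladd: "L (a + b) = L a + L b" if "a \<in> U" "b \<in> U" for a b using lin that by (auto simp: linear_on_def)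
  have Lsc: "L (c *\<^sub>R a) = c * L a" if "a \<in> U" for a c using lin that by (auto simp: linear_on_def)
  have Ldiff: "L (a - b) = L a - L b" if "a \<in> U" "b \<in> U" for a b
    using Ladd[of "a - b" b] that sU by (simp add: subspace_diff)
  define Q where "Q x = inner x x - 2 * L x" for x
  have Qlow: "Q x \<ge> - M\<^sup>2" if "x \<in> U" for x
  proof -
    have "\<bar>L x\<bar> \<le> M * norm x" using bnd that .
    moreover have "inner x x = (norm x)\<^sup>2" by (simp add: power2_norm_eq_inner)
    moreover have "(norm x - M)\<^sup>2 \<ge> 0" by simp
    ultimately show ?thesis unfolding Q_def by (auto simp: power2_eq_square algebra_simps)
  qed
  define m where "m = Inf (Q ` U)"
  have U0: "0 \<in> U" using sU by (simp add: subspace_0)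
  have bdd: "bdd_below (Q ` U)" using Qlow by (auto intro!: bdd_belowI[of _ "- M\<^sup>2"])
  have mle: "m \<le> Q x" if "x \<in> U" for x unfolding m_def using bdd that by (simp add: cInf_lower)
  have "\<exists>x\<in>U. Q x < m + 1 / (real n + 1)" for n
  proof (rule ccontr)
    assume "\<not> ?thesis"
    then have "m + 1 / (real n + 1) \<le> Inf (Q ` U)" using U0
      by (intro cInf_greatest) (auto simp: not_less)
    then show False unfolding m_def by (simp add: add_pos_pos)
  qed
  then obtain xs where xsU: "\<And>n. xs n \<in> U" and xsQ: "\<And>n. Q (xs n) < m + 1 / (real n + 1)"
    by metis
  have par: "(norm (a - b))\<^sup>2 \<le> 2 * (Q a + Q b) - 4 * m" if "a \<in> U" "b \<in> U" for a b
  proof -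
    have mid: "(1/2) *\<^sub>R (a + b) \<in> U" using that sU by (simp add: subspace_add subspace_scale)
    have "m \<le> Q ((1/2) *\<^sub>R (a + b))" using mle[OF mid] .
    moreover have "L ((1/2) *\<^sub>R (a + b)) = (L a + L b) / 2" using Lsc Ladd that sU
      by (simp add: subspace_add)
    moreover have "(norm (a - b))\<^sup>2 = inner a a - 2 * inner a b + inner b b"
      by (simp add: power2_norm_eq_inner inner_diff inner_commute)
    moreover have "inner ((1/2) *\<^sub>R (a + b)) ((1/2) *\<^sub>R (a + b)) = (inner a a + 2 * inner a b + inner b b) / 4"
      by (simp add: inner_add inner_commute)
    ultimately show ?thesis unfolding Q_def by (simp add: field_simps)
  qed
  have cauchy: "Cauchy xs"
  proof (rule metric_CauchyI)
    fix e :: real assume e: "e > 0"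
    obtain N :: nat where N: "4 / e\<^sup>2 < real N" using reals_Archimedean2 by blast
    have "dist (xs p) (xs n) < e" if "p \<ge> N" "n \<ge> N" for p n
    proof -
      have h1: "1 / (real p + 1) \<le> 1 / (real N + 1)" "1 / (real n + 1) \<le> 1 / (real N + 1)"
        using that by (auto simp: frac_le)
      have "(norm (xs p - xs n))\<^sup>2 \<le> 2 * (Q (xs p) + Q (xs n)) - 4 * m" by (rule par[OF xsU xsU])
      also have "\<dots> \<le> 4 * (1 / (real N + 1))" using xsQ[of p] xsQ[of n] h1 by (smt (verit))
      also have "\<dots> < e\<^sup>2"
      proof -
        have "4 < e\<^sup>2 * real N" using N e by (simp add: field_simps)
        moreover have "0 < e\<^sup>2" using e by simp
        ultimately have "4 < e\<^sup>2 * real N + e\<^sup>2" by linarith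
        then have "4 < e\<^sup>2 * (real N + 1)" by (simp only: distrib_left mult_1_right)
        then show ?thesis by (simp add: field_simps)
      qed
      finally have "(norm (xs p - xs n))\<^sup>2 < e\<^sup>2" .
      then show ?thesis using e by (simp add: dist_norm power_less_imp_less_base)
    qed
    then show "\<exists>M. \<forall>m\<ge>M. \<forall>n\<ge>M. dist (xs m) (xs n) < e" by blast
  qed
  then obtain z where lim: "xs \<longlonglongrightarrow> z" using Cauchy_convergent_iff convergent_def by blast
  have zU: "z \<in> U" using cU xsU lim closed_sequentially by blast
  have "(\<lambda>n. norm (xs n - z)) \<longlonglongrightarrow> 0" using lim tendsto_norm_zero_iff LIMSEQ_iff_nz
    by (metis Lim_null tendsto_norm_zero)
  have Llim: "(\<lambda>n. L (xs n)) \<longlonglongrightarrow> L z"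
  proof -
    have t0: "(\<lambda>n. M * norm (xs n - z)) \<longlonglongrightarrow> 0"
      using \<open>(\<lambda>n. norm (xs n - z)) \<longlonglongrightarrow> 0\<close> tendsto_mult_right_zero by blast
    have b: "norm (L (xs n) - L z) \<le> M * norm (xs n - z)" for n
      using bnd[of "xs n - z"] Ldiff[OF xsU zU] sU xsU zU by (simp add: subspace_diff)
    have ev: "eventually (\<lambda>n. norm (L (xs n) - L z) \<le> M * norm (xs n - z)) sequentially"
      using b by (intro always_eventually allI)
    have "(\<lambda>n. L (xs n) - L z) \<longlonglongrightarrow> 0"
      using Lim_null_comparison[OF ev t0] .
    then show ?thesis by (simp add: LIM_zero_iff)
  qed
  have Qlim: "(\<lambda>n. Q (xs n)) \<longlonglongrightarrow> Q z"
    unfolding Q_def by (intro tendsto_intros lim Llim)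
  have "(\<lambda>n. m + 1 / (real n + 1)) \<longlonglongrightarrow> m"
    using LIMSEQ_inverse_real_of_nat_add[of m] by (simp add: inverse_eq_divide add.commute)
  then have "Q z \<le> m" using Qlim xsQ
    by (intro tendsto_le[OF _ _ Qlim]) (auto intro: less_imp_le always_eventually)
  then have zmin: "Q z \<le> Q x" if "x \<in> U" for x using mle[OF that] by linarith
  show ?thesis
  proof (intro bexI[OF _ zU] ballI)
    fix x assume xU: "x \<in> U"
    define c where "c = inner x z - L x"
    define s where "s = inner x x"
    define t where "t = - c / (s + 1)"
    have s0: "s \<ge> 0" unfolding s_def by simp
    have "z + t *\<^sub>R x \<in> U" using xU zU sU by (simp add: subspace_add subspace_scale)
    then have "Q z \<le> Q (z + t *\<^sub>R x)" by (rule zmin)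
    moreover have "L (z + t *\<^sub>R x) = L z + t * L x" using Ladd Lsc xU zU sU by (simp add: subspace_scale)
    ultimately have "0 \<le> 2 * t * c + t\<^sup>2 * s"
      unfolding Q_def c_def s_def by (simp add: inner_add inner_commute power2_eq_square algebra_simps)
    moreover have "2 * t * c + t\<^sup>2 * s = c\<^sup>2 * (- s - 2) / (s+1)\<^sup>2"
      unfolding t_def using s0 aux_quad[of "s+1" c] by simp
    ultimately have "0 \<le> c\<^sup>2 * (- s - 2) / (s+1)\<^sup>2" by simp
    moreover have "(s+1)\<^sup>2 > 0" using s0 by simp
    ultimately have "0 \<le> c\<^sup>2 * (- s - 2)"
      by (metis zero_le_divide_iff not_less)
    then have "c\<^sup>2 * (s + 2) \<le> 0" by (simp add: algebra_simps)
    moreover have "c\<^sup>2 \<ge> 0" by simp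
    ultimately have "c\<^sup>2 = 0" using s0 by (smt (verit) mult_pos_pos)
    then have "c = 0" by simp
    then show "L x = inner x z" unfolding c_def by simp
  qed
qed


locale adjsetup =
  fixes U :: "'b::{real_inner,complete_space} set" and T :: "'b \<Rightarrow> 'a::real_inner" and K :: real
  assumes sU: "subspace U" and cU: "closed U" and linT: "linear_on U T"
    and bT: "\<And>x. x \<in> U \<Longrightarrow> norm (T x) \<le> K * norm x" and K0: "K \<ge> 0"
begin

lemma Tadd: "a \<in> U \<Longrightarrow> b \<in> U \<Longrightarrow> T (a + b) = T a + T b"
  using linT by (auto simp: linear_on_def)
lemma Tsc: "a \<in> U \<Longrightarrow> T (c *\<^sub>R a) = c *\<^sub>R T a"
  using linT by (auto simp: linear_on_def)
lemma Tdiff: "a \<in> U \<Longrightarrow> b \<in> U \<Longrightarrow> T (a - b) = T a - T b"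
  using Tadd[of "a - b" b] sU by (simp add: subspace_diff)

lemma ex1: "\<exists>!z. z \<in> U \<and> (\<forall>x\<in>U. inner (T x) y = inner x z)"
proof -
  have lin: "linear_on U (\<lambda>x. inner (T x) y)"
    unfolding linear_on_def using Tadd Tsc by (simp add: inner_add_left)
  have "\<bar>inner (T x) y\<bar> \<le> (K * norm y) * norm x" if "x \<in> U" for x
  proof -
    have "\<bar>inner (T x) y\<bar> \<le> norm (T x) * norm y" by (rule Cauchy_Schwarz_ineq2)
    also have "\<dots> \<le> K * norm x * norm y" using bT[OF that] by (simp add: mult_right_mono)
    finally show ?thesis by (simp add: algebra_simps)
  qed
  then obtain z where z: "z \<in> U" "\<forall>x\<in>U. inner (T x) y = inner x z"
    using riesz_sub[OF sU cU lin, of "K * norm y"] K0 by auto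
  moreover have "z' = z" if "z' \<in> U" "\<forall>x\<in>U. inner (T x) y = inner x z'" for z'
  proof -
    have "z' - z \<in> U" using that z sU by (simp add: subspace_diff)
    then have "inner (z' - z) z' = inner (z' - z) z" using that z by metis
    then have "inner (z' - z) (z' - z) = 0" by (simp add: inner_diff_right)
    then show ?thesis by simp
  qed
  ultimately show ?thesis by blast
qed

lemma adjU: "hadj U T y \<in> U" and adjP: "\<forall>x\<in>U. inner (T x) y = inner x (hadj U T y)"
  using theI'[OF ex1[of y]] unfolding hadj_def by auto

lemma adj_unique: "z \<in> U \<Longrightarrow> (\<forall>x\<in>U. inner (T x) y = inner x z) \<Longrightarrow> hadj U T y = z"
  using ex1[of y] adjU[of y] adjP[of y] by blast

lemma adj_diff: "hadj U T (a - b) = hadj U T a - hadj U T b"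
  by (rule adj_unique) (use adjU adjP sU in \<open>auto simp: subspace_diff inner_diff_right\<close>)

lemma adj_add: "hadj U T (a + b) = hadj U T a + hadj U T b"
  by (rule adj_unique) (use adjU adjP sU in \<open>auto simp: subspace_add inner_add_right\<close>)

lemma adj_sc: "hadj U T (c *\<^sub>R a) = c *\<^sub>R hadj U T a"
  by (rule adj_unique) (use adjU adjP sU in \<open>auto simp: subspace_scale\<close>)

lemma adj_norm: "norm (hadj U T y) \<le> K * norm y"
proof -
  let ?z = "hadj U T y"
  have "(norm ?z)\<^sup>2 = inner ?z ?z" by (simp add: power2_norm_eq_inner)
  also have "\<dots> = inner (T ?z) y" using adjP adjU by metis
  also have "\<dots> \<le> norm (T ?z) * norm y" by (rule norm_cauchy_schwarz)
  also have "\<dots> \<le> K * norm ?z * norm y" using bT[OF adjU] by (simp add: mult_right_mono)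
  finally have "norm ?z * norm ?z \<le> norm ?z * (K * norm y)" by (simp add: power2_eq_square algebra_simps)
  then show ?thesis
    by (cases "norm ?z = 0") (use K0 in \<open>auto\<close>)
qed


end

lemma opnorm_bound:
  fixes U :: "'a::real_normed_vector set" and S :: "'a \<Rightarrow> 'b::real_normed_vector"
  assumes sU: "subspace U" and linS: "\<And>c x. x \<in> U \<Longrightarrow> S (c *\<^sub>R x) = c *\<^sub>R S x"
    and bS: "\<And>x. x \<in> U \<Longrightarrow> norm (S x) \<le> B * norm x" and B0: "B \<ge> 0"
  shows "opnorm_on U S \<ge> 0" "opnorm_on U S \<le> B" "\<And>x. x \<in> U \<Longrightarrow> norm (S x) \<le> opnorm_on U S * norm x"
proof -
  define A where "A = {norm (S x) | x. x \<in> U \<and> norm x \<le> 1}"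
  have U0: "0 \<in> U" using sU by (simp add: subspace_0)
  have ne: "norm (S 0) \<in> A" unfolding A_def using U0 by auto
  have ub: "a \<le> B" if aA: "a \<in> A" for a
  proof -
    obtain x where "x \<in> U" "norm x \<le> 1" "a = norm (S x)" using aA unfolding A_def by blast
    then show ?thesis using bS[of x] B0 by (smt (verit) mult_left_le)
  qed
  have bdd: "bdd_above A" by (rule bdd_aboveI[OF ub])
  have opA: "opnorm_on U S = Sup A" unfolding opnorm_on_def A_def by simp
  show "opnorm_on U S \<ge> 0" unfolding opA using cSup_upper[OF ne bdd] norm_ge_zero[of "S 0"] by linarith
  show "opnorm_on U S \<le> B" unfolding opA using ne ub by (intro cSup_least) auto
  fix x assume xU: "x \<in> U"
  show "norm (S x) \<le> opnorm_on U S * norm x"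
  proof (cases "x = 0")
    case True
    then have "S x = 0" using linS[OF U0, of 0] by simp
    then show ?thesis using True by simp
  next
    case False
    let ?y = "(1 / norm x) *\<^sub>R x"
    have "?y \<in> U" using xU sU by (simp add: subspace_scale)
    moreover have "norm ?y \<le> 1" using False by simp
    ultimately have "norm (S ?y) \<in> A" unfolding A_def by blast
    then have "norm (S ?y) \<le> opnorm_on U S" unfolding opA using bdd by (rule cSup_upper)
    moreover have "norm (S ?y) = norm (S x) / norm x" using linS[OF xU] False by simp
    ultimately show ?thesis using False by (simp add: field_simps)
  qed
qed

lemma infdist_bound:
  fixes f :: "'a::metric_space"
  assumes "S \<noteq> {}" "b > 0" "\<And>p. p \<in> S \<Longrightarrow> N \<le> a + b * dist f p"
  shows "N \<le> a + b * infdist f S"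
proof -
  have "(N - a) / b \<le> infdist f S"
    unfolding infdist_notempty[OF assms(1)]
  proof (rule cINF_greatest[OF assms(1)])
    fix p assume "p \<in> S"
    then show "(N - a) / b \<le> dist f p" using assms(2) assms(3)[of p] by (simp add: field_simps)
  qed
  then show ?thesis using assms(2) by (simp add: field_simps)
qed

theorem mainTheorem11:
  fixes W :: "nat \<Rightarrow> 'a::{real_inner,complete_space} set"
    and V :: "nat \<Rightarrow> 'a set" and d :: "nat \<Rightarrow> 'a \<Rightarrow> 'a"
    and Wh :: "real \<Rightarrow> nat \<Rightarrow> 'b::{real_inner,complete_space} set"
    and Vh :: "real \<Rightarrow> nat \<Rightarrow> 'b set" and dh :: "real \<Rightarrow> nat \<Rightarrow> 'b \<Rightarrow> 'b"
    and i :: "real \<Rightarrow> nat \<Rightarrow> 'b \<Rightarrow> 'a"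
    and Pi_h :: "real \<Rightarrow> 'a \<Rightarrow> 'b"
    and k :: nat
  assumes W: "hilbert_complex W V d"
    and Wh: "\<And>h. h > 0 \<Longrightarrow> hilbert_complex (Wh h) (Vh h) (dh h)"
    and i_morph: "\<And>h. h > 0 \<Longrightarrow> hc_morphism (Wh h) (Vh h) (dh h) W V d (i h)"
    and i_unif: "\<And>j. \<exists>K. \<forall>h>0. \<forall>x\<in>Wh h j. norm (i h j x) \<le> K * norm x"
    and Pi_bl: "\<And>h. h > 0 \<Longrightarrow> bounded_linear_on (W k) (Wh h k) (Pi_h h)"
    and Pi_unif: "\<exists>K. \<forall>h>0. \<forall>f\<in>W k. norm (Pi_h h f) \<le> K * norm f"
    and Pi_inv: "\<And>h x. h > 0 \<Longrightarrow> x \<in> Wh h k \<Longrightarrow> Pi_h h (i h k x) = x"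
  shows "\<exists>C. \<forall>h>0. \<forall>f\<in>W k.
           norm (Pi_h h f - hadj (Wh h k) (i h k) f)
             \<le> C * (opnorm_on (Wh h k) (\<lambda>x. x - hadj (Wh h k) (i h k) (i h k x)) * norm f
                    + infdist f (i h k ` Wh h k))"
proof -
  obtain KI0 where KI0: "\<forall>h>0. \<forall>x\<in>Wh h k. norm (i h k x) \<le> KI0 * norm x" using i_unif[of k] by blast
  obtain KP0 where KP0: "\<forall>h>0. \<forall>f\<in>W k. norm (Pi_h h f) \<le> KP0 * norm f" using Pi_unif by blast
  define KI where "KI = max KI0 0"
  define KP where "KP = max KP0 0"
  have KI: "norm (i h k x) \<le> KI * norm x" if "h > 0" "x \<in> Wh h k" for h x
  proof -
    have "norm (i h k x) \<le> KI0 * norm x" using KI0 that by blast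
    also have "\<dots> \<le> KI * norm x" unfolding KI_def by (rule mult_right_mono) auto
    finally show ?thesis .
  qed
  have KP: "norm (Pi_h h f) \<le> KP * norm f" if "h > 0" "f \<in> W k" for h f
  proof -
    have "norm (Pi_h h f) \<le> KP0 * norm f" using KP0 that by blast
    also have "\<dots> \<le> KP * norm f" unfolding KP_def by (rule mult_right_mono) auto
    finally show ?thesis .
  qed
  have KIp: "KI \<ge> 0" and KPp: "KP \<ge> 0" unfolding KI_def KP_def by auto
  define B where "B = 1 + KI * KI"
  define b where "b = KP + KI + B * KP + 1"
  have Bp: "B \<ge> 0" unfolding B_def using KIp by simp
  have bp: "b > 0" unfolding b_def using KIp KPp Bp mult_nonneg_nonneg[OF Bp KPp] by linarith
  show ?thesis
  proof (intro exI[of _ "KP + b"] allI impI ballI)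
    fix h :: real and f assume h: "h > 0" and fW: "f \<in> W k"
    let ?U = "Wh h k" and ?I = "i h k" and ?P = "Pi_h h"
    let ?A = "hadj ?U ?I"
    let ?S = "\<lambda>x. x - ?A (?I x)"
    let ?opn = "opnorm_on ?U ?S"
    have sWk: "subspace (W k)" using W unfolding hilbert_complex_def by auto
    have sU: "subspace ?U" and cU: "closed ?U" using Wh[OF h] unfolding hilbert_complex_def by auto
    have blI: "bounded_linear_on ?U (W k) ?I" using i_morph[OF h] unfolding hc_morphism_def by auto
    then have linI: "linear_on ?U ?I" and IW: "\<And>x. x \<in> ?U \<Longrightarrow> ?I x \<in> W k"
      unfolding bounded_linear_on_def by auto
    have linP: "linear_on (W k) ?P" using Pi_bl[OF h] unfolding bounded_linear_on_def by auto
    interpret adjsetup ?U ?I KI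
      using sU cU linI KI[OF h] KIp by unfold_locales auto
    have Sb: "norm (?S x) \<le> B * norm x" if "x \<in> ?U" for x
    proof -
      have "norm (?S x) \<le> norm x + norm (?A (?I x))" by (rule norm_triangle_ineq4)
      also have "norm (?A (?I x)) \<le> KI * norm (?I x)" by (rule adj_norm)
      also have "KI * norm (?I x) \<le> KI * (KI * norm x)" using KI[OF h that] KIp by (rule mult_left_mono)
      finally show ?thesis unfolding B_def by (simp add: algebra_simps)
    qed
    have Ssc: "?S (c *\<^sub>R x) = c *\<^sub>R ?S x" if "x \<in> ?U" for c x
      using Tsc[OF that] adj_sc by (simp add: scaleR_diff_right)
    have opn12: "?opn \<ge> 0" "?opn \<le> B"
      using opnorm_bound(1,2)[of ?U ?S B, OF sU Ssc Sb Bp] by auto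
    have opn3: "norm (?S x) \<le> ?opn * norm x" if "x \<in> ?U" for x
      using opnorm_bound(3)[of ?U ?S B, OF sU Ssc Sb Bp that] .
    note opn = opn12 opn3
    have key: "norm (?P f - ?A f) \<le> KP * ?opn * norm f + b * dist f p" if pS: "p \<in> ?I ` ?U" for p
    proof -
      obtain x where xU: "x \<in> ?U" and p: "p = ?I x" using pS by blast
      define g where "g = f - p"
      have pW: "p \<in> W k" using IW xU p by simp
      have gW: "g \<in> W k" unfolding g_def using fW pW sWk by (simp add: subspace_diff)
      have fgp: "f = g + p" unfolding g_def by simp
      have Pf: "?P f = ?P g + x"
        using linP gW pW Pi_inv[OF h xU] unfolding fgp linear_on_def p by auto
      have Af: "?A f = ?A g + ?A p" unfolding fgp by (rule adj_add)
      have eq: "?P f - ?A f = (?P g - ?A g) + ?S x" using Pf Af p by simp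
      have tri: "norm (?P f - ?A f) \<le> norm (?P g) + norm (?A g) + norm (?S x)"
        unfolding eq using norm_triangle_ineq[of "?P g - ?A g" "?S x"] norm_triangle_ineq4[of "?P g" "?A g"] by linarith
      have a1: "norm (?P g) \<le> KP * norm g" by (rule KP[OF h gW])
      have a2: "norm (?A g) \<le> KI * norm g" by (rule adj_norm)
      have a3: "norm (?S x) \<le> ?opn * norm x" by (rule opn(3)[OF xU])
      have np: "norm p \<le> norm f + norm g"
      proof -
        have "p = f - g" unfolding g_def by simp
        then show ?thesis using norm_triangle_ineq4[of f g] by simp
      qed
      have nx: "norm x \<le> KP * (norm f + norm g)"
      proof -
        have "norm x = norm (?P p)" using Pi_inv[OF h xU] p by simp
        also have "\<dots> \<le> KP * norm p" by (rule KP[OF h pW])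
        also have "\<dots> \<le> KP * (norm f + norm g)" by (rule mult_left_mono[OF np KPp])
        finally show ?thesis .
      qed
      have b1: "?opn * norm x \<le> ?opn * (KP * (norm f + norm g))" by (rule mult_left_mono[OF nx opn(1)])
      have b2: "?opn * (KP * norm g) \<le> B * (KP * norm g)"
        by (rule mult_right_mono[OF opn(2)]) (simp add: KPp)
      have e1: "?opn * (KP * (norm f + norm g)) = KP * ?opn * norm f + ?opn * (KP * norm g)"
        by (simp add: algebra_simps)
      have e2: "(KP + KI + B * KP) * norm g = KP * norm g + KI * norm g + B * (KP * norm g)"
        by (simp add: algebra_simps)
      have e3: "b * norm g = (KP + KI + B * KP) * norm g + norm g" unfolding b_def by (simp add: algebra_simps)
      have "norm (?P f - ?A f) \<le> KP * ?opn * norm f + b * norm g"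
        using tri a1 a2 a3 b1 b2 e1 e2 e3 norm_ge_zero[of g] by linarith
      then show ?thesis unfolding g_def by (simp add: dist_norm)
    qed
    have ne: "?I ` ?U \<noteq> {}" using subspace_0[OF sU] by blast
    have main: "norm (?P f - ?A f) \<le> KP * ?opn * norm f + b * infdist f (?I ` ?U)"
      by (rule infdist_bound[OF ne bp key])
    have X: "?opn * norm f \<ge> 0" using opn(1) by simp
    have Y: "infdist f (?I ` ?U) \<ge> 0" by (rule infdist_nonneg)
    have "KP * ?opn * norm f + b * infdist f (?I ` ?U) \<le> (KP + b) * (?opn * norm f + infdist f (?I ` ?U))"
      using X Y KPp bp by (simp add: algebra_simps)
    then show "norm (?P f - ?A f) \<le> (KP + b) * (?opn * norm f + infdist f (?I ` ?U))"
      using main by linarith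
  qed
qed

end
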